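(* Let $A$ be a set and $W$ a set of subsets of $A$ which contains $\emptyset$ and $A$ and is closed under pairwise unions and intersections. Suppose that no $C\subseteq A\times A$ all of whose rows $\{b\mid (a,b)\in C\}$ and columns $\{b\mid (b,a)\in C\}$ $(a\in A)$ belong to $W$ has infinitely many distinct rows (equivalently, infinitely many distinct columns). Then $(A,W)$ is a Pratt comonoid.
   Context: A Pratt comonoid is a pair $(A,W)$ where $A$ is a set and $W$ is a set of subsets of $A$ such that (i) $\emptyset\in W$ and $A\in W$; (ii) whenever $C\subseteq A\times A$ is such that for every $a\in A$ both the $a$-th row $\{b\mid (a,b)\in C\}$ and the $a$-th column $\{b\mid (b,a)\in C\}$ belong to $W$, the diagonal $\{b\mid (b,b)\in C\}$ also belongs to $W$. *)

theory Defs
  imports Main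
begin

definition row :: "('a \<times> 'a) set \<Rightarrow> 'a \<Rightarrow> 'a set" where
  "row C a = {b. (a, b) \<in> C}"

definition col :: "('a \<times> 'a) set \<Rightarrow> 'a \<Rightarrow> 'a set" where
  "col C a = {b. (b, a) \<in> C}"

definition diag :: "('a \<times> 'a) set \<Rightarrow> 'a set" where
  "diag C = {b. (b, b) \<in> C}"

definition W_matrix :: "'a set \<Rightarrow> 'a set set \<Rightarrow> ('a \<times> 'a) set \<Rightarrow> bool" where
  "W_matrix A W C \<longleftrightarrow> C \<subseteq> A \<times> A \<and> (\<forall>a\<in>A. row C a \<in> W \<and> col C a \<in> W)"

definition pratt_comonoid :: "'a set \<Rightarrow> 'a set set \<Rightarrow> bool" where
  "pratt_comonoid A W \<longleftrightarrow>
     W \<subseteq> Pow A \<and> {} \<in> W \<and> A \<in> W \<and>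
     (\<forall>C. W_matrix A W C \<longrightarrow> diag C \<in> W)"

end

theory Submission
  imports Defs
begin

lemma fin_Inter_W:
  assumes "finite F" "F \<subseteq> W" "A \<in> W"
    and "\<And>X Y. X \<in> W \<Longrightarrow> Y \<in> W \<Longrightarrow> X \<inter> Y \<in> W"
  shows "A \<inter> \<Inter>F \<in> W"
  using assms(1,2)
proof (induction F rule: finite_induct)
  case empty then show ?case using assms(3) by simp
next
  case (insert x F)
  have "A \<inter> \<Inter>(insert x F) = x \<inter> (A \<inter> \<Inter>F)" by blast
  then show ?case using insert assms(4) by auto
qed

lemma fin_Union_W:
  assumes "finite F" "F \<subseteq> W" "{} \<in> W"
    and "\<And>X Y. X \<in> W \<Longrightarrow> Y \<in> W \<Longrightarrow> X \<union> Y \<in> W"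
  shows "\<Union>F \<in> W"
  using assms(1,2)
proof (induction F rule: finite_induct)
  case empty then show ?case using assms(3) by simp
next
  case (insert x F)
  then show ?case using assms(4) by auto
qed

theorem corollary5p4:
  fixes A :: "'a set" and W :: "'a set set"
  assumes "W \<subseteq> Pow A"
    and "{} \<in> W" and "A \<in> W"
    and "\<And>X Y. X \<in> W \<Longrightarrow> Y \<in> W \<Longrightarrow> X \<union> Y \<in> W"
    and "\<And>X Y. X \<in> W \<Longrightarrow> Y \<in> W \<Longrightarrow> X \<inter> Y \<in> W"
    and "\<And>C. W_matrix A W C \<Longrightarrow> finite (row C ` A)"
  shows "pratt_comonoid A W"
  unfolding pratt_comonoid_def
proof (intro conjI allI impI)
  fix C assume C: "W_matrix A W C"
  have sub: "C \<subseteq> A \<times> A" and rc: "\<And>a. a \<in> A \<Longrightarrow> row C a \<in> W \<and> col C a \<in> W"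
    using C unfolding W_matrix_def by auto
  have CT: "W_matrix A W (C\<inverse>)"
    using C unfolding W_matrix_def row_def col_def by auto
  have frow: "finite (row C ` A)" using assms(6) C by blast
  have "finite (row (C\<inverse>) ` A)" using assms(6) CT by blast
  moreover have "row (C\<inverse>) = col C" unfolding row_def col_def by auto
  ultimately have fcol: "finite (col C ` A)" by simp
  have rowA: "\<And>a. row C a \<subseteq> A" using sub unfolding row_def by auto
  have eq: "diag C = \<Union> ((\<lambda>R. R \<inter> (A \<inter> \<Inter>(col C ` R))) ` (row C ` A))"
  proof
    show "diag C \<subseteq> \<Union> ((\<lambda>R. R \<inter> (A \<inter> \<Inter>(col C ` R))) ` (row C ` A))"
    proof
      fix b assume "b \<in> diag C"
      then have bb: "(b,b) \<in> C" unfolding diag_def by auto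
      then have bA: "b \<in> A" using sub by auto
      have "b \<in> row C b \<inter> (A \<inter> \<Inter>(col C ` row C b))"
        using bb bA unfolding row_def col_def by auto
      then show "b \<in> \<Union> ((\<lambda>R. R \<inter> (A \<inter> \<Inter>(col C ` R))) ` (row C ` A))"
        using bA by blast
    qed
  next
    show "\<Union> ((\<lambda>R. R \<inter> (A \<inter> \<Inter>(col C ` R))) ` (row C ` A)) \<subseteq> diag C"
    proof
      fix b assume "b \<in> \<Union> ((\<lambda>R. R \<inter> (A \<inter> \<Inter>(col C ` R))) ` (row C ` A))"
      then obtain a where "b \<in> row C a" "\<forall>c\<in>row C a. b \<in> col C c" by auto
      then show "b \<in> diag C" unfolding diag_def col_def by auto
    qed
  qed
  have "\<And>R. R \<in> row C ` A \<Longrightarrow> R \<inter> (A \<inter> \<Inter>(col C ` R)) \<in> W"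
  proof -
    fix R assume R: "R \<in> row C ` A"
    then have RW: "R \<in> W" and RA: "R \<subseteq> A" using rc rowA by auto
    have "finite (col C ` R)" using fcol RA by (meson finite_subset image_mono)
    moreover have "col C ` R \<subseteq> W" using rc RA by auto
    ultimately have "A \<inter> \<Inter>(col C ` R) \<in> W" using fin_Inter_W assms(3,5) by blast
    then show "R \<inter> (A \<inter> \<Inter>(col C ` R)) \<in> W" using RW assms(5) by blast
  qed
  then have "(\<lambda>R. R \<inter> (A \<inter> \<Inter>(col C ` R))) ` (row C ` A) \<subseteq> W" by blast
  moreover have "finite ((\<lambda>R. R \<inter> (A \<inter> \<Inter>(col C ` R))) ` (row C ` A))" using frow by blast
  ultimately show "diag C \<in> W" unfolding eq
    using fin_Union_W[OF _ _ assms(2,4)] by blast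
qed (use assms in auto)

end
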